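(* Let $\epsilon\in\{1,-1\}$. Let $X,Y,Z\in\mathbb{Z}[i]$ satisfy $X^2+Y^2=\epsilon iZ^2$, $\gcd(X,Y,Z)\in U$, $XYZ\neq0$, where $X,Y\in O^I$ and $Z=(1+i)W$ with $W\in O^I$. Then there exist an integer $t$, $0\le t\le 3$, and $P,Q\in G$, both not divisible by $1+i$, with $\gcd(P,Q)=1$, such that $$X=i^{t+1}\frac{P^2+\epsilon(-1)^t iQ^2}{1+i},\quad Y=i^t\frac{P^2-\epsilon(-1)^t iQ^2}{1+i},\quad Z=(1+i)PQ.$$
   Context: $\mathbb{Z}[i]$ is the ring of Gaussian integers, $U=\{1,-1,i,-i\}$ its unit group; $R(\alpha),I(\alpha)$ are real and imaginary parts. $\gcd(\cdot)\in U$ means no common non-unit divisor; for $P,Q\in G$, $\gcd(P,Q)=1$ means no common prime factor. $O=\{\alpha: R(\alpha)+I(\alpha)\equiv1\pmod 2\}$, $O^I=\{\alpha\in O: R(\alpha)\equiv 1\pmod 4\}$. $G$ is the set of Gaussian integers $(1+i)^{a_1}p_2^{a_2}\cdots p_m^{a_m}$ with integers $a_j\ge0$ and $p_j$ distinct Gaussian primes in $O^I$. *)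

theory Defs
  imports Complex_Main
begin

definition gauss :: "complex \<Rightarrow> bool" where
  "gauss z \<longleftrightarrow> (\<exists>a b :: int. z = Complex (of_int a) (of_int b))"

definition gdvd :: "complex \<Rightarrow> complex \<Rightarrow> bool" (infix "gdvd" 50) where
  "a gdvd b \<longleftrightarrow> (\<exists>c. gauss c \<and> b = a * c)"

definition gunit :: "complex \<Rightarrow> bool" where
  "gunit u \<longleftrightarrow> u \<in> {1, -1, \<i>, -\<i>}"

definition gprime :: "complex \<Rightarrow> bool" where
  "gprime p \<longleftrightarrow> gauss p \<and> p \<noteq> 0 \<and> \<not> gunit p \<and>
     (\<forall>a b. gauss a \<longrightarrow> gauss b \<longrightarrow> p = a * b \<longrightarrow> gunit a \<or> gunit b)"

definition in_O :: "complex \<Rightarrow> bool" where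
  "in_O z \<longleftrightarrow> (\<exists>a b :: int. z = Complex (of_int a) (of_int b) \<and> odd (a + b))"

definition in_OI :: "complex \<Rightarrow> bool" where
  "in_OI z \<longleftrightarrow> (\<exists>a b :: int. z = Complex (of_int a) (of_int b) \<and> odd (a + b) \<and> a mod 4 = 1)"

definition in_G :: "complex \<Rightarrow> bool" where
  "in_G x \<longleftrightarrow> (\<exists>(k::nat) (S::complex set) (e::complex \<Rightarrow> nat).
      finite S \<and> (\<forall>p\<in>S. gprime p \<and> in_OI p) \<and> x = (1 + \<i>) ^ k * (\<Prod>p\<in>S. p ^ e p))"

end

theory Submission
  imports Defs
begin


lemma gauss_iff: "gauss z \<longleftrightarrow> Re z \<in> \<int> \<and> Im z \<in> \<int>"
  unfolding gauss_def
proof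
  assume "\<exists>a b. z = Complex (of_int a) (of_int b)" then show "Re z \<in> \<int> \<and> Im z \<in> \<int>" by auto
next
  assume "Re z \<in> \<int> \<and> Im z \<in> \<int>"
  then obtain a b where "Re z = of_int a" "Im z = of_int b" by (auto elim!: Ints_cases)
  then show "\<exists>a b. z = Complex (of_int a) (of_int b)" by (metis complex.collapse)
qed

lemma gaussE: assumes "gauss z" obtains a b :: int where "z = Complex (of_int a) (of_int b)"
  using assms unfolding gauss_def by blast

lemma gauss_add[simp,intro]: "gauss a \<Longrightarrow> gauss b \<Longrightarrow> gauss (a + b)"
  by (simp add: gauss_iff)
lemma gauss_diff[simp,intro]: "gauss a \<Longrightarrow> gauss b \<Longrightarrow> gauss (a - b)"
  by (simp add: gauss_iff)
lemma gauss_minus[simp,intro]: "gauss a \<Longrightarrow> gauss (- a)"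
  by (simp add: gauss_iff)
lemma gauss_mult[simp,intro]: "gauss a \<Longrightarrow> gauss b \<Longrightarrow> gauss (a * b)"
  by (simp add: gauss_iff)
lemma gauss_0[simp,intro]: "gauss 0" and gauss_1[simp,intro]: "gauss 1" and gauss_ii[simp,intro]: "gauss \<i>"
  by (simp_all add: gauss_iff)
lemma gauss_of_int[simp,intro]: "gauss (of_int k)"
  by (simp add: gauss_iff)
lemma gauss_numeral[simp,intro]: "gauss (numeral k)"
  by (simp add: gauss_iff)
lemma gauss_power[simp,intro]: "gauss a \<Longrightarrow> gauss (a ^ n)"
  by (induction n) auto

definition nn :: "complex \<Rightarrow> nat" where "nn z = nat (\<lfloor>Re z\<rfloor>^2 + \<lfloor>Im z\<rfloor>^2)"

lemma nn_real: assumes "gauss z" shows "real (nn z) = (cmod z)^2"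
proof -
  obtain a b where z: "z = Complex (of_int a) (of_int b)" using assms by (rule gaussE)
  have "a^2 + b^2 \<ge> 0" by simp
  then show ?thesis unfolding nn_def z cmod_power2 by simp
qed

lemma nn_mult: "gauss a \<Longrightarrow> gauss b \<Longrightarrow> nn (a * b) = nn a * nn b"
proof -
  assume "gauss a" "gauss b"
  then have "real (nn (a*b)) = real (nn a * nn b)"
    by (simp add: nn_real norm_mult power_mult_distrib)
  then show ?thesis by (simp only: of_nat_eq_iff)
qed

lemma nn_0_iff: "gauss z \<Longrightarrow> nn z = 0 \<longleftrightarrow> z = 0"
proof -
  assume "gauss z"
  then have "real (nn z) = (cmod z)^2" by (rule nn_real)
  moreover have "nn z = 0 \<longleftrightarrow> real (nn z) = 0" by simp
  ultimately show ?thesis by simp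
qed

lemma gunit_gauss: "gunit u \<Longrightarrow> gauss u"
  unfolding gunit_def by auto

lemma gunit_nz: "gunit u \<Longrightarrow> u \<noteq> 0"
  unfolding gunit_def by auto

lemma gunit_mult: "gunit u \<Longrightarrow> gunit v \<Longrightarrow> gunit (u * v)"
  unfolding gunit_def by auto

lemma gunit_inv: "gunit u \<Longrightarrow> gunit (1 / u)"
  unfolding gunit_def by (auto simp: field_simps)

lemma gunit_inv_gauss: "gunit u \<Longrightarrow> gauss (1 / u)"
  using gunit_inv gunit_gauss by blast

lemma sq_eq_1_int: "(a::int)^2 + b^2 = 1 \<Longrightarrow> (a = 1 \<or> a = -1) \<and> b = 0 \<or> a = 0 \<and> (b = 1 \<or> b = -1)"
proof -
  assume h: "a^2 + b^2 = 1"
  have "a^2 \<le> 1" "b^2 \<le> 1" using h by (smt (verit) zero_le_power2)+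
  then have "\<bar>a\<bar> \<le> 1" "\<bar>b\<bar> \<le> 1" by (simp_all add: abs_square_le_1)
  then have "a = -1 \<or> a = 0 \<or> a = 1" "b = -1 \<or> b = 0 \<or> b = 1" by auto
  then show ?thesis using h by (elim disjE) simp_all
qed

lemma nn_1_iff: "gauss z \<Longrightarrow> nn z = 1 \<longleftrightarrow> gunit z"
proof -
  assume "gauss z"
  then obtain a b where z: "z = Complex (of_int a) (of_int b)" by (rule gaussE)
  have "nn z = 1 \<longleftrightarrow> a^2 + b^2 = 1" unfolding nn_def z by auto
  also have "\<dots> \<longleftrightarrow> (a = 1 \<or> a = -1) \<and> b = 0 \<or> a = 0 \<and> (b = 1 \<or> b = -1)"
    using sq_eq_1_int by auto
  also have "\<dots> \<longleftrightarrow> gunit z" unfolding gunit_def z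
    by (auto simp: complex_eq_iff)
  finally show ?thesis .
qed



lemma gdvd_iff: "a \<noteq> 0 \<Longrightarrow> a gdvd b \<longleftrightarrow> gauss (b / a)"
  unfolding gdvd_def by (metis nonzero_eq_divide_eq mult.commute)

lemma gdvd_refl[simp]: "a gdvd a"
  unfolding gdvd_def by (rule exI[of _ 1]) simp

lemma gdvd_0[simp]: "a gdvd 0"
  unfolding gdvd_def by (rule exI[of _ 0]) simp

lemma gdvd_trans: "a gdvd b \<Longrightarrow> b gdvd c \<Longrightarrow> a gdvd c"
  unfolding gdvd_def by (metis gauss_mult mult.assoc)

lemma gdvd_multR: "a gdvd b \<Longrightarrow> gauss c \<Longrightarrow> a gdvd b * c"
  unfolding gdvd_def by (metis gauss_mult mult.assoc)

lemma gdvd_multL: "a gdvd b \<Longrightarrow> gauss c \<Longrightarrow> a gdvd c * b"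
  using gdvd_multR by (metis mult.commute)

lemma gdvd_mult_self: "gauss c \<Longrightarrow> a gdvd a * c"
  unfolding gdvd_def by blast

lemma gdvd_mult_self2: "gauss c \<Longrightarrow> a gdvd c * a"
  unfolding gdvd_def by (metis mult.commute)

lemma gdvd_add: "a gdvd b \<Longrightarrow> a gdvd c \<Longrightarrow> a gdvd b + c"
  unfolding gdvd_def by (metis gauss_add distrib_left)

lemma gdvd_diff: "a gdvd b \<Longrightarrow> a gdvd c \<Longrightarrow> a gdvd b - c"
  unfolding gdvd_def by (metis gauss_diff right_diff_distrib)

lemma gdvd_minus: "a gdvd b \<Longrightarrow> a gdvd - b"
  unfolding gdvd_def by (metis gauss_minus mult_minus_right)

lemma gdvd_gauss: "gauss a \<Longrightarrow> a gdvd b \<Longrightarrow> gauss b"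
  unfolding gdvd_def by auto

lemma gdvd_unit_cancel: "a gdvd u * b \<Longrightarrow> gunit u \<Longrightarrow> a gdvd b"
proof -
  assume "a gdvd u * b" "gunit u"
  then have "a gdvd (u * b) * (1 / u)" using gdvd_multR gunit_inv_gauss by blast
  then show ?thesis using gunit_nz[OF \<open>gunit u\<close>] by simp
qed

lemma gunit_gdvd: "gunit u \<Longrightarrow> gauss b \<Longrightarrow> u gdvd b"
proof -
  assume u: "gunit u" "gauss b"
  have "gauss ((1/u)*b)" using u gunit_inv_gauss by blast
  moreover have "b = u * ((1/u)*b)" using gunit_nz[OF u(1)] by simp
  ultimately show ?thesis unfolding gdvd_def by blast
qed

lemma gdvd_1_unit: "gauss a \<Longrightarrow> a gdvd 1 \<Longrightarrow> gunit a"
proof -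
  assume a: "gauss a" "a gdvd 1"
  then obtain c where c: "gauss c" "1 = a * c" unfolding gdvd_def by blast
  then have "nn a * nn c = 1" using nn_mult[OF a(1) c(1)] c(2) by (simp add: nn_def)
  then have "nn a = 1" by simp
  then show ?thesis using nn_1_iff a by blast
qed

lemma gdvd_unit_unit: "gauss a \<Longrightarrow> a gdvd u \<Longrightarrow> gunit u \<Longrightarrow> gunit a"
  using gdvd_1_unit gdvd_trans gunit_gdvd gauss_1 by blast

lemma gdiv: assumes "gauss a" "gauss b" "b \<noteq> 0"
  shows "\<exists>q. gauss q \<and> nn (a - q * b) < nn b"
proof -
  define w where "w = a / b"
  define q where "q = Complex (of_int (round (Re w))) (of_int (round (Im w)))"
  define e where "e = w - q"
  have q: "gauss q" unfolding q_def gauss_def by blast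
  have "\<bar>Re e\<bar> \<le> 1/2" "\<bar>Im e\<bar> \<le> 1/2" unfolding e_def q_def
    using of_int_round_abs_le[of "Re w"] of_int_round_abs_le[of "Im w"] by (auto simp: abs_minus_commute)
  then have "(Re e)^2 \<le> 1/4" "(Im e)^2 \<le> 1/4"
    using power_mono[of "\<bar>Re e\<bar>" "1/2" 2] power_mono[of "\<bar>Im e\<bar>" "1/2" 2] by (simp_all add: power_divide)
  then have e: "(cmod e)^2 < 1" unfolding cmod_power2 by simp
  have r: "a - q * b = b * e" unfolding e_def w_def using assms(3) by (simp add: field_simps)
  have g: "gauss (a - q*b)" using assms q by simp
  have "real (nn (a - q * b)) = (cmod (a - q*b))^2" by (rule nn_real[OF g])
  also have "\<dots> = (cmod b)^2 * (cmod e)^2" unfolding r by (simp add: norm_mult power_mult_distrib)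
  also have "\<dots> < (cmod b)^2" using e assms(3) by simp
  also have "\<dots> = real (nn b)" using nn_real assms by simp
  finally show ?thesis using q by auto
qed



lemma bezout_aux: "\<forall>a b. nn b = n \<longrightarrow> gauss a \<longrightarrow> gauss b \<longrightarrow>
   (\<exists>d x y. gauss d \<and> gauss x \<and> gauss y \<and> d gdvd a \<and> d gdvd b \<and> d = x*a + y*b)"
proof (induction n rule: less_induct)
  case (less n)
  show ?case
  proof (intro allI impI)
    fix a b assume n: "nn b = n" and ab: "gauss a" "gauss b"
    show "\<exists>d x y. gauss d \<and> gauss x \<and> gauss y \<and> d gdvd a \<and> d gdvd b \<and> d = x*a + y*b"
    proof (cases "b = 0")
      case True
      have "a = 1*a + 0*b" by simp
      moreover have "a gdvd b" using True by simp
      ultimately show ?thesis using ab by (intro exI[of _ a] exI[of _ 1] exI[of _ 0] conjI) simp_all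
    next
      case False
      then obtain q where q: "gauss q" "nn (a - q*b) < nn b" using gdiv ab by blast
      define r where "r = a - q*b"
      have r: "gauss r" using ab q unfolding r_def by simp
      have "nn r < n" using q(2) n unfolding r_def by simp
      then have "\<exists>d x y. gauss d \<and> gauss x \<and> gauss y \<and> d gdvd b \<and> d gdvd r \<and> d = x*b + y*r"
        using less.IH[OF \<open>nn r < n\<close>, THEN spec[of _ b], THEN spec[of _ r]] r ab by blast
      then obtain d x y where d: "gauss d" "gauss x" "gauss y" "d gdvd b" "d gdvd r" "d = x*b + y*r"
        by blast
      have "a = r + b * q" unfolding r_def by simp
      moreover have "d gdvd b * q" using d(4) q(1) by (rule gdvd_multR)
      ultimately have "d gdvd a" using d(5) gdvd_add by metis
      moreover have "d = y*a + (x - y*q)*b" unfolding d(6) r_def by (simp add: algebra_simps)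
      ultimately show ?thesis using d q ab by (intro exI[of _ d] exI[of _ y] exI[of _ "x - y*q"] conjI) simp_all
    qed
  qed
qed

lemma bezout: "gauss a \<Longrightarrow> gauss b \<Longrightarrow>
   \<exists>d x y. gauss d \<and> gauss x \<and> gauss y \<and> d gdvd a \<and> d gdvd b \<and> d = x*a + y*b"
  using bezout_aux by blast

lemma gprime_gauss: "gprime p \<Longrightarrow> gauss p" unfolding gprime_def by blast
lemma gprime_nz: "gprime p \<Longrightarrow> p \<noteq> 0" unfolding gprime_def by blast
lemma gprime_nunit: "gprime p \<Longrightarrow> \<not> gunit p" unfolding gprime_def by blast

lemma gprime_nn: "gprime p \<Longrightarrow> nn p > 1"
proof -
  assume p: "gprime p"
  have "nn p \<noteq> 0" using nn_0_iff gprime_gauss gprime_nz p by blast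
  moreover have "nn p \<noteq> 1" using nn_1_iff gprime_gauss gprime_nunit p by blast
  ultimately show ?thesis by linarith
qed

lemma euclid: assumes p: "gprime p" and ab: "gauss a" "gauss b" and d: "p gdvd a * b"
  shows "p gdvd a \<or> p gdvd b"
proof -
  obtain d x y where d: "gauss d" "gauss x" "gauss y" "d gdvd p" "d gdvd a" "d = x*p + y*a"
    using bezout[OF gprime_gauss[OF p] ab(1)] by blast
  obtain c where c: "gauss c" "p = d * c" using d(4) unfolding gdvd_def by blast
  have "gunit d \<or> gunit c" using p c d(1) unfolding gprime_def by blast
  then show ?thesis
  proof
    assume u: "gunit c"
    obtain k where k: "gauss k" "a = d * k" using d(5) unfolding gdvd_def by blast
    have "a = p * ((1/c) * k)" using k c gunit_nz[OF u] by simp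
    moreover have "gauss ((1/c)*k)" using k gunit_inv_gauss[OF u] by blast
    ultimately show ?thesis unfolding gdvd_def by blast
  next
    assume u: "gunit d"
    obtain m where m: "gauss m" "a * b = p * m" using assms(4) unfolding gdvd_def by blast
    have "b = b * d * (1/d)" using gunit_nz[OF u] by simp
    also have "b * d = x*b*p + y*(a*b)" unfolding d(6) by (simp add: algebra_simps)
    also have "\<dots> = p*(x*b + y*m)" unfolding m(2) by (simp add: algebra_simps)
    also have "p * (x * b + y * m) * (1 / d) = p * ((x*b + y*m) * (1/d))" by simp
    finally have "b = p * ((x*b + y*m) * (1/d))" .
    moreover have "gauss ((x*b + y*m) * (1/d))"
      by (rule gauss_mult[OF _ gunit_inv_gauss[OF u]]) (use d m ab in simp)
    ultimately show ?thesis unfolding gdvd_def by blast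
  qed
qed

lemma euclid_sq: "gprime p \<Longrightarrow> gauss a \<Longrightarrow> p gdvd a^2 \<Longrightarrow> p gdvd a"
  using euclid[of p a a] by (simp add: power2_eq_square)

lemma gprime_ndvd_unit: "gprime p \<Longrightarrow> gunit u \<Longrightarrow> \<not> p gdvd u"
  using gdvd_unit_unit gprime_gauss gprime_nunit by blast

lemma prime_divisor_aux: "\<forall>a. nn a = n \<longrightarrow> gauss a \<longrightarrow> a \<noteq> 0 \<longrightarrow> \<not> gunit a \<longrightarrow>
    (\<exists>p. gprime p \<and> p gdvd a)"
proof (induction n rule: less_induct)
  case (less n)
  show ?case
  proof (intro allI impI)
    fix a assume a: "nn a = n" "gauss a" "a \<noteq> 0" "\<not> gunit a"
    show "\<exists>p. gprime p \<and> p gdvd a"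
    proof (cases "gprime a")
      case True then show ?thesis by auto
    next
      case False
      then obtain x y where xy: "gauss x" "gauss y" "a = x*y" "\<not> gunit x" "\<not> gunit y"
        using a unfolding gprime_def by blast
      have "x \<noteq> 0" "y \<noteq> 0" using xy a by auto
      then have "nn x \<noteq> 0" "nn y \<noteq> 0" "nn y \<noteq> 1" using nn_0_iff nn_1_iff xy by blast+
      then have "nn x < nn a" using nn_mult xy by simp
      then obtain p where "gprime p" "p gdvd x" using less.IH a xy \<open>x \<noteq> 0\<close> by blast
      then show ?thesis using xy gdvd_multR by blast
    qed
  qed
qed

lemma prime_divisor: "gauss a \<Longrightarrow> a \<noteq> 0 \<Longrightarrow> \<not> gunit a \<Longrightarrow> \<exists>p. gprime p \<and> p gdvd a"
  using prime_divisor_aux by blast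

lemma gprime_unit_mult: assumes p: "gprime p" and s: "gunit s" shows "gprime (s * p)"
  unfolding gprime_def
proof (intro conjI allI impI)
  show "gauss (s*p)" using p s gprime_gauss gunit_gauss by blast
  show "s * p \<noteq> 0" using p s gprime_nz gunit_nz by simp
  show "\<not> gunit (s*p)"
  proof
    assume "gunit (s*p)"
    then have "gunit ((1/s) * (s*p))" using gunit_mult gunit_inv s by blast
    then show False using p gprime_nunit gunit_nz[OF s] by simp
  qed
  fix a b assume ab: "gauss a" "gauss b" "s * p = a * b"
  then have "p = ((1/s)*a) * b" using gunit_nz[OF s] by (simp add: field_simps)
  moreover have "gauss ((1/s)*a)" using ab gunit_inv_gauss[OF s] by blast
  ultimately have "gunit ((1/s)*a) \<or> gunit b" using p ab unfolding gprime_def by blast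
  then show "gunit a \<or> gunit b"
  proof
    assume "gunit ((1/s)*a)"
    then have "gunit (s * ((1/s)*a))" using gunit_mult s by blast
    then show ?thesis using gunit_nz[OF s] by simp
  qed simp
qed



lemma sq_aux: assumes B: "gauss B" and c: "gunit c"
  shows "\<forall>A S. nn A = n \<longrightarrow> gauss A \<longrightarrow> gauss S \<longrightarrow> A \<noteq> 0 \<longrightarrow>
     (\<forall>p. gprime p \<longrightarrow> \<not> (p gdvd A \<and> p gdvd B)) \<longrightarrow> A * B = c * S^2 \<longrightarrow>
     (\<exists>u P. gunit u \<and> gauss P \<and> A = u * P^2)"
proof (induction n rule: less_induct)
  case (less n)
  show ?case
  proof (intro allI impI)
    fix A S assume n: "nn A = n" and A: "gauss A" and S: "gauss S" and A0: "A \<noteq> 0"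
      and cop: "\<forall>p. gprime p \<longrightarrow> \<not> (p gdvd A \<and> p gdvd B)" and eq: "A * B = c * S^2"
    show "\<exists>u P. gunit u \<and> gauss P \<and> A = u * P^2"
    proof (cases "gunit A")
      case True
      then show ?thesis by (intro exI[of _ A] exI[of _ 1]) simp
    next
      case False
      obtain p where p: "gprime p" "p gdvd A" using prime_divisor[OF A A0 False] by blast
      have p0: "p \<noteq> 0" using p gprime_nz by blast
      obtain A1 where A1: "gauss A1" "A = p * A1" using p(2) unfolding gdvd_def by blast
      have "p gdvd c * S^2" using eq[symmetric] p(2) gdvd_multR B by metis
      then have "p gdvd S^2" using gdvd_unit_cancel c by blast
      then have "p gdvd S" using euclid_sq p S by blast
      then obtain S1 where S1: "gauss S1" "S = p * S1" unfolding gdvd_def by blast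
      have "p * (A1 * B) = p * (c * p * S1^2)" using eq unfolding A1(2) S1(2)
        by (simp add: algebra_simps power2_eq_square)
      then have e1: "A1 * B = p * (c * S1^2)" using p0 by simp
      have "p gdvd A1 * B" unfolding e1 using S1 c gunit_gauss by (intro gdvd_mult_self) simp
      moreover have "\<not> p gdvd B" using cop p by blast
      ultimately have "p gdvd A1" using euclid p A1 B by blast
      then obtain A2 where A2: "gauss A2" "A1 = p * A2" unfolding gdvd_def by blast
      have "p * (A2 * B) = p * (c * S1^2)" using e1 unfolding A2(2) by (simp add: algebra_simps)
      then have e2: "A2 * B = c * S1^2" using p0 by simp
      have A2e: "A = A2 * p^2" unfolding A1(2) A2(2) by (simp add: algebra_simps power2_eq_square)
      have A20: "A2 \<noteq> 0" using A0 A2e by auto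
      have "nn A = nn A2 * (nn p * nn p)" unfolding A2e power2_eq_square
        using nn_mult A2(1) gprime_gauss[OF p(1)] by simp
      moreover have "nn p > 1" using gprime_nn p by blast
      moreover have "nn A2 > 0" using nn_0_iff A2 A20 by blast
      ultimately have lt: "nn A2 < n" using n by (simp add: less_le_trans)
      have cop2: "\<forall>q. gprime q \<longrightarrow> \<not> (q gdvd A2 \<and> q gdvd B)"
      proof (intro allI impI notI)
        fix q assume "gprime q" "q gdvd A2 \<and> q gdvd B"
        then have "q gdvd A" unfolding A2e using gdvd_multR gprime_gauss p by simp
        then show False using cop \<open>gprime q\<close> \<open>q gdvd A2 \<and> q gdvd B\<close> by blast
      qed
      have "\<exists>u P. gunit u \<and> gauss P \<and> A2 = u * P^2"
        using less.IH[OF lt, THEN spec[of _ A2], THEN spec[of _ S1]] A2(1) S1(1) A20 cop2 e2 by blast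
      then obtain u P where uP: "gunit u" "gauss P" "A2 = u * P^2" by blast
      have "A = u * (p * P)^2" unfolding A2e uP(3) by (simp add: algebra_simps power2_eq_square)
      then show ?thesis using uP gprime_gauss[OF p(1)] by (intro exI[of _ u] exI[of _ "p*P"]) simp
    qed
  qed
qed

lemma sq_lemma: "gauss A \<Longrightarrow> gauss B \<Longrightarrow> gauss S \<Longrightarrow> gunit c \<Longrightarrow> A \<noteq> 0 \<Longrightarrow>
   (\<forall>p. gprime p \<longrightarrow> \<not> (p gdvd A \<and> p gdvd B)) \<Longrightarrow> A * B = c * S^2 \<Longrightarrow>
   \<exists>u P. gunit u \<and> gauss P \<and> A = u * P^2"
  using sq_aux[of B c "nn A"] by blast



lemma dvd_1i: "(1 + \<i>) gdvd Complex (of_int a) (of_int b) \<longleftrightarrow> even (a + b)"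
proof
  assume "(1 + \<i>) gdvd Complex (of_int a) (of_int b)"
  then obtain c where c: "gauss c" "Complex (of_int a) (of_int b) = (1 + \<i>) * c" unfolding gdvd_def by blast
  obtain x y where xy: "c = Complex (of_int x) (of_int y)" using c(1) by (rule gaussE)
  have "of_int a = (of_int (x - y) :: real)" "of_int b = (of_int (x + y) :: real)"
    using c(2) unfolding xy complex_eq_iff by simp_all
  then have "a = x - y" "b = x + y" by (simp_all only: of_int_eq_iff)
  then show "even (a + b)" by simp
next
  assume e: "even (a + b)"
  define x where "x = (a + b) div 2"
  define y where "y = (b - a) div 2"
  have "a = x - y" "b = x + y" using e unfolding x_def y_def by presburger+
  then have "Complex (of_int a) (of_int b) = (1 + \<i>) * Complex (of_int x) (of_int y)"
    by (simp add: complex_eq_iff)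
  moreover have "gauss (Complex (of_int x) (of_int y))" unfolding gauss_def by blast
  ultimately show "(1 + \<i>) gdvd Complex (of_int a) (of_int b)" unfolding gdvd_def by blast
qed

lemma in_OI_iff: "in_OI z \<longleftrightarrow> (\<exists>k m :: int. z = Complex (of_int (4*k+1)) (of_int (2*m)))"
proof
  assume "in_OI z"
  then obtain a b :: int where ab: "z = Complex (of_int a) (of_int b)" "odd (a + b)" "a mod 4 = 1"
    unfolding in_OI_def by blast
  have "a = 4 * (a div 4) + 1" "b = 2 * (b div 2)" using ab by presburger+
  then show "\<exists>k m :: int. z = Complex (of_int (4*k+1)) (of_int (2*m))" using ab(1) by metis
next
  assume "\<exists>k m :: int. z = Complex (of_int (4*k+1)) (of_int (2*m))"
  then obtain k m :: int where z: "z = Complex (of_int (4*k+1)) (of_int (2*m))" by blast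
  have "odd (4*k+1 + 2*m)" "(4*k+1) mod 4 = 1" by presburger+
  then show "in_OI z" unfolding in_OI_def z by blast
qed

lemma OI_gauss: "in_OI z \<Longrightarrow> gauss z"
  unfolding in_OI_def gauss_def by blast

lemma OI_odd: "in_OI z \<Longrightarrow> \<not> (1 + \<i>) gdvd z"
  unfolding in_OI_def using dvd_1i by blast

lemma OI_nz: "in_OI z \<Longrightarrow> z \<noteq> 0"
  using OI_odd gdvd_0 by blast

lemma OI_mult: assumes "in_OI x" "in_OI y" shows "in_OI (x * y)"
proof -
  obtain k m where x: "x = Complex (of_int (4*k+1)) (of_int (2*m))" using assms(1) in_OI_iff by blast
  obtain l n where y: "y = Complex (of_int (4*l+1)) (of_int (2*n))" using assms(2) in_OI_iff by blast
  have "x * y = Complex (of_int (4*(4*k*l + k + l - m*n)+1)) (of_int (2*((4*k+1)*n + m*(4*l+1))))"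
    unfolding x y by (simp add: complex_eq_iff algebra_simps)
  then show ?thesis unfolding in_OI_iff by blast
qed

lemma OI_power: "in_OI x \<Longrightarrow> in_OI (x ^ n)"
proof (induction n)
  case 0 show ?case unfolding in_OI_iff by (rule exI[of _ 0], rule exI[of _ 0]) (simp add: complex_eq_iff)
next
  case (Suc n) then show ?case using OI_mult by simp
qed

lemma OI_sq: assumes "in_OI w" shows "\<exists>a b :: int. w^2 = Complex (of_int (4*a+1)) (of_int (4*b))"
proof -
  obtain k m where x: "w = Complex (of_int (4*k+1)) (of_int (2*m))" using assms in_OI_iff by blast
  have "w^2 = Complex (of_int (4*(4*k*k+2*k-m*m)+1)) (of_int (4*((4*k+1)*m)))"
    unfolding x by (simp add: complex_eq_iff algebra_simps power2_eq_square)
  then show ?thesis by blast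
qed

lemma OI_normalize: assumes z: "gauss z" "\<not> (1 + \<i>) gdvd z"
  shows "\<exists>s. gunit s \<and> in_OI (s * z)"
proof -
  obtain a b where ab: "z = Complex (of_int a) (of_int b)" using z(1) by (rule gaussE)
  have o: "odd (a + b)" using z(2) dvd_1i unfolding ab by blast
  have "a mod 4 = 1 \<or> (-a) mod 4 = 1 \<or> (-b) mod 4 = 1 \<or> b mod 4 = 1" using o by presburger
  then consider "a mod 4 = 1" | "(-a) mod 4 = 1" | "(-b) mod 4 = 1" | "b mod 4 = 1" by blast
  then show ?thesis
  proof cases
    case 1
    have "in_OI (1 * z)" unfolding ab in_OI_def using o 1 by auto
    moreover have "gunit 1" by (simp add: gunit_def)
    ultimately show ?thesis by blast
  next
    case 2
    have "-1 * z = Complex (of_int (-a)) (of_int (-b))" unfolding ab by (simp add: complex_eq_iff)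
    moreover have "odd (-a + -b)" using o by presburger
    ultimately have "in_OI (-1 * z)" using 2 unfolding in_OI_def by blast
    moreover have "gunit (-1)" by (simp add: gunit_def)
    ultimately show ?thesis by blast
  next
    case 3
    have "\<i> * z = Complex (of_int (-b)) (of_int a)" unfolding ab by (simp add: complex_eq_iff)
    moreover have "odd (-b + a)" using o by presburger
    ultimately have "in_OI (\<i> * z)" using 3 unfolding in_OI_def by blast
    moreover have "gunit (\<i>)" by (simp add: gunit_def)
    ultimately show ?thesis by blast
  next
    case 4
    have "-\<i> * z = Complex (of_int b) (of_int (-a))" unfolding ab by (simp add: complex_eq_iff)
    moreover have "odd (b + -a)" using o by presburger
    ultimately have "in_OI (-\<i> * z)" using 4 unfolding in_OI_def by blast
    moreover have "gunit (-\<i>)" by (simp add: gunit_def)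
    ultimately show ?thesis by blast
  qed
qed

lemma OI_unit: assumes z: "in_OI z" and uz: "in_OI (u * z)" and u: "gunit u" shows "u = 1"
proof -
  obtain k m where x: "z = Complex (of_int (4*k+1)) (of_int (2*m))" using z in_OI_iff by blast
  obtain l n where y: "u * z = Complex (of_int (4*l+1)) (of_int (2*n))" using uz in_OI_iff by blast
  have "u = 1 \<or> u = -1 \<or> u = \<i> \<or> u = -\<i>" using u unfolding gunit_def by auto
  then show ?thesis
  proof (elim disjE)
    assume "u = -1"
    then have "of_int (-(4*k+1)) = (of_int (4*l+1) :: real)" using y unfolding x by (simp add: complex_eq_iff)
    then have "-(4*k+1) = 4*l+1" by (simp only: of_int_eq_iff)
    then have False by presburger
    then show ?thesis ..
  next
    assume "u = \<i>"
    then have "of_int (-(2*m)) = (of_int (4*l+1) :: real)" using y unfolding x by (simp add: complex_eq_iff)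
    then have "-(2*m) = 4*l+1" by (simp only: of_int_eq_iff)
    then have False by presburger
    then show ?thesis ..
  next
    assume "u = -\<i>"
    then have "of_int (2*m) = (of_int (4*l+1) :: real)" using y unfolding x by (simp add: complex_eq_iff)
    then have "(2*m) = 4*l+1" by (simp only: of_int_eq_iff)
    then have False by presburger
    then show ?thesis ..
  qed
qed

lemma OI_neg: "in_OI z \<Longrightarrow> \<not> in_OI (- z)"
  using OI_unit[of z "-1"] unfolding gunit_def by auto



lemma prod_insert_step: assumes "finite S"
  shows "p * (\<Prod>q\<in>S. q ^ e q) = (\<Prod>q\<in>insert p S. q ^ (e(p := (if p \<in> S then e p + 1 else 1))) q)"
proof (cases "p \<in> S")
  case True
  have "(\<Prod>q\<in>insert p S. q ^ (e(p := (if p \<in> S then e p + 1 else 1))) q)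
      = p ^ (e p + 1) * (\<Prod>q\<in>S - {p}. q ^ (e(p := (if p \<in> S then e p + 1 else 1))) q)"
    using True assms by (simp add: insert_absorb prod.remove)
  also have "(\<Prod>q\<in>S - {p}. q ^ (e(p := (if p \<in> S then e p + 1 else 1))) q) = (\<Prod>q\<in>S - {p}. q ^ e q)"
    by (rule prod.cong) auto
  also have "(\<Prod>q\<in>S. q ^ e q) = p ^ e p * (\<Prod>q\<in>S - {p}. q ^ e q)"
    using True assms by (simp add: prod.remove)
  ultimately show ?thesis by (simp add: mult.assoc)
next
  case False
  have "(\<Prod>q\<in>insert p S. q ^ (e(p := (if p \<in> S then e p + 1 else 1))) q)
      = p * (\<Prod>q\<in>S. q ^ (e(p := (if p \<in> S then e p + 1 else 1))) q)"
    using False assms by simp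
  also have "(\<Prod>q\<in>S. q ^ (e(p := (if p \<in> S then e p + 1 else 1))) q) = (\<Prod>q\<in>S. q ^ e q)"
    using False by (intro prod.cong) auto
  finally show ?thesis by simp
qed

lemma OI_factor_aux: "\<forall>w. nn w = n \<longrightarrow> in_OI w \<longrightarrow>
   (\<exists>S e. finite S \<and> (\<forall>p\<in>S. gprime p \<and> in_OI p) \<and> w = (\<Prod>p\<in>S. p ^ e p))"
proof (induction n rule: less_induct)
  case (less n)
  show ?case
  proof (intro allI impI)
    fix w assume n: "nn w = n" and w: "in_OI w"
    have wg: "gauss w" using OI_gauss w by blast
    have w0: "w \<noteq> 0" using OI_nz w by blast
    show "\<exists>S e. finite S \<and> (\<forall>p\<in>S. gprime p \<and> in_OI p) \<and> w = (\<Prod>p\<in>S. p ^ e p)"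
    proof (cases "gunit w")
      case True
      have "in_OI (w * 1)" using w by simp
      moreover have "in_OI 1" using OI_power[OF w, of 0] by simp
      ultimately have "w = 1" using OI_unit True by blast
      then show ?thesis by (intro exI[of _ "{}"]) simp
    next
      case False
      obtain p0 where p0: "gprime p0" "p0 gdvd w" using prime_divisor[OF wg w0 False] by blast
      have p0g: "gauss p0" using gprime_gauss p0 by blast
      have "\<not> (1 + \<i>) gdvd p0" using p0 OI_odd[OF w] gdvd_trans by blast
      then obtain s where s: "gunit s" "in_OI (s * p0)" using OI_normalize p0g by blast
      define p where "p = s * p0"
      have p: "gprime p" "in_OI p" unfolding p_def using gprime_unit_mult p0 s by blast+
      obtain k where k: "gauss k" "w = p0 * k" using p0 unfolding gdvd_def by blast
      define w1 where "w1 = (1/s) * k"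
      have w1g: "gauss w1" unfolding w1_def using k gunit_inv_gauss s by blast
      have ww1: "w = p * w1" unfolding p_def w1_def k(2) using gunit_nz[OF s(1)] by simp
      have "\<not> (1 + \<i>) gdvd w1" using OI_odd[OF w] gdvd_multL gprime_gauss p ww1 by metis
      then obtain s' where s': "gunit s'" "in_OI (s' * w1)" using OI_normalize w1g by blast
      have "in_OI (s' * w)" using OI_mult[OF p(2) s'(2)] unfolding ww1 by (simp add: algebra_simps)
      then have "s' = 1" using OI_unit w s' by blast
      then have w1: "in_OI w1" using s' by simp
      have "nn w = nn p * nn w1" unfolding ww1 using nn_mult gprime_gauss p w1g by blast
      moreover have "nn p > 1" using gprime_nn p by blast
      moreover have "nn w1 > 0" using nn_0_iff w1g OI_nz w1 by blast
      ultimately have lt: "nn w1 < n" using n by simp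
      obtain S e where Se: "finite S" "\<forall>p\<in>S. gprime p \<and> in_OI p" "w1 = (\<Prod>p\<in>S. p ^ e p)"
        using less.IH[OF lt, THEN spec[of _ w1]] w1 by blast
      have "w = (\<Prod>q\<in>insert p S. q ^ (e(p := (if p \<in> S then e p + 1 else 1))) q)"
        unfolding ww1 Se(3) using prod_insert_step[OF Se(1)] by simp
      moreover have "\<forall>q\<in>insert p S. gprime q \<and> in_OI q" using Se p by blast
      moreover have "finite (insert p S)" using Se by simp
      ultimately show ?thesis by blast
    qed
  qed
qed

lemma OI_in_G: "in_OI w \<Longrightarrow> in_G w"
proof -
  assume "in_OI w"
  then obtain S e where Se: "finite S" "\<forall>p\<in>S. gprime p \<and> in_OI p" "w = (\<Prod>p\<in>S. p ^ e p)"
    using OI_factor_aux by blast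
  then have "w = (1 + \<i>) ^ 0 * (\<Prod>p\<in>S. p ^ e p)" by simp
  then show "in_G w" unfolding in_G_def using Se by blast
qed



lemma odd_not_dvd2: assumes "odd a" "gauss c" "Complex (of_int a) (of_int b) = (1 + \<i>) * ((1 + \<i>) * c)"
  shows False
proof -
  obtain x y where xy: "c = Complex (of_int x) (of_int y)" using assms(2) by (rule gaussE)
  have "of_int a = (of_int (-2*y) :: real)" using assms(3) unfolding xy complex_eq_iff by simp
  then have "a = -2*y" by (simp only: of_int_eq_iff)
  then show False using assms(1) by presburger
qed

lemma nn_1i: "nn (1 + \<i>) = 2" by (simp add: nn_def)

lemma prime_dvd_1i: assumes p: "gprime p" "p gdvd (1 + \<i>)" shows "(1 + \<i>) gdvd p"
proof -
  obtain c where c: "gauss c" "1 + \<i> = p * c" using p(2) unfolding gdvd_def by blast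
  have pg: "gauss p" using gprime_gauss p by blast
  have e: "nn p * nn c = 2" using nn_mult[OF pg c(1)] c(2) nn_1i by simp
  have "nn p \<ge> 2" using gprime_nn[OF p(1)] by simp
  then have "2 * nn c \<le> nn p * nn c" by (rule mult_le_mono1)
  then have "nn c \<le> 1" using e by simp
  moreover have "nn c \<noteq> 0" using e by (metis mult_0_right zero_neq_numeral)
  ultimately have "nn c = 1" by simp
  then have u: "gunit c" using nn_1_iff c by blast
  have "p = (1 + \<i>) * (1 / c)" using c(2) gunit_nz[OF u] by (simp add: field_simps)
  then show ?thesis unfolding gdvd_def using gunit_inv_gauss[OF u] by blast
qed

lemma cancel_1i: assumes p: "gprime p" and A: "p gdvd A" "\<not> (1 + \<i>) gdvd A" and t: "gauss t"
  and d: "p gdvd (1 + \<i>) * t" shows "p gdvd t"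
proof -
  have "p gdvd (1 + \<i>) \<or> p gdvd t" using euclid[OF p _ t d] by simp
  moreover have "\<not> p gdvd (1 + \<i>)"
  proof
    assume "p gdvd (1 + \<i>)"
    then have "(1 + \<i>) gdvd p" using prime_dvd_1i p by blast
    then show False using A gdvd_trans by blast
  qed
  ultimately show ?thesis by blast
qed

lemma norm_sq: assumes u: "gunit u" and P0: "gauss P0" "\<not> (1 + \<i>) gdvd P0"
  shows "\<exists>u' P. gunit u' \<and> in_OI P \<and> u * P0^2 = u' * P^2"
proof -
  obtain s where s: "gunit s" "in_OI (s * P0)" using OI_normalize P0 by blast
  have s4: "s^4 = 1" using s(1) unfolding gunit_def by (auto simp: power4_eq_xxxx)
  have "u * P0^2 = (u * s^2) * (s * P0)^2"
    using s4 by (simp add: algebra_simps power2_eq_square power4_eq_xxxx)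
  moreover have "gunit (u * s^2)" using u s gunit_mult by (simp add: power2_eq_square)
  ultimately show ?thesis using s(2) by blast
qed

lemma sq_unit: assumes "gunit r" "r * Complex (of_int (4*a+1)) (of_int (4*b)) = Complex (of_int (4*c+1)) (of_int (4*d))"
  shows "r = 1"
proof -
  have "r = 1 \<or> r = -1 \<or> r = \<i> \<or> r = -\<i>" using assms(1) unfolding gunit_def by auto
  then show ?thesis
  proof (elim disjE)
    assume "r = -1"
    then have "of_int (-(4*a+1)) = (of_int (4*c+1) :: real)" using assms(2) by (simp add: complex_eq_iff)
    then have "-(4*a+1) = 4*c+1" by (simp only: of_int_eq_iff)
    then have False by presburger
    then show ?thesis ..
  next
    assume "r = \<i>"
    then have "of_int (-(4*b)) = (of_int (4*c+1) :: real)" using assms(2) by (simp add: complex_eq_iff)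
    then have "-(4*b) = 4*c+1" by (simp only: of_int_eq_iff)
    then have False by presburger
    then show ?thesis ..
  next
    assume "r = -\<i>"
    then have "of_int (4*b) = (of_int (4*c+1) :: real)" using assms(2) by (simp add: complex_eq_iff)
    then have "4*b = 4*c+1" by (simp only: of_int_eq_iff)
    then have False by presburger
    then show ?thesis ..
  qed
qed



lemma h3: "(1::complex) + \<i> \<noteq> 0" by (simp add: complex_eq_iff)
lemma h0: "(1 + \<i>) * (1 + \<i>) = 2 * \<i>" by (simp add: complex_eq_iff)
lemma h1: "\<i> / (1 + \<i>) = (1 + \<i>) / 2"
  using h3 h0 by (simp add: divide_simps mult.assoc)
lemma h2: "1 / (1 + \<i>) = (1 + \<i>) / (2 * \<i>)"
  using h3 h0 by (simp add: divide_simps mult.assoc) (simp add: complex_eq_iff)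

lemma cancel_1i': "p gdvd (1 + \<i>) * t \<Longrightarrow> gprime p \<Longrightarrow> p gdvd A \<Longrightarrow> \<not> (1 + \<i>) gdvd A \<Longrightarrow> gauss t \<Longrightarrow> p gdvd t"
  using cancel_1i by blast

theorem theorem4p10:
  fixes \<epsilon> :: int and X Y Z W :: complex
  assumes "\<epsilon> \<in> {1, -1}"
    and "gauss X" and "gauss Y" and "gauss Z"
    and "X\<^sup>2 + Y\<^sup>2 = of_int \<epsilon> * \<i> * Z\<^sup>2"
    and "\<forall>d. gauss d \<longrightarrow> d gdvd X \<longrightarrow> d gdvd Y \<longrightarrow> d gdvd Z \<longrightarrow> gunit d"
    and "X * Y * Z \<noteq> 0"
    and "in_OI X" and "in_OI Y"
    and "Z = (1 + \<i>) * W" and "in_OI W"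
  shows "\<exists>(t::nat) P Q. t \<le> 3 \<and> in_G P \<and> in_G Q \<and>
           \<not> (1 + \<i>) gdvd P \<and> \<not> (1 + \<i>) gdvd Q \<and>
           (\<forall>p. gprime p \<longrightarrow> \<not> (p gdvd P \<and> p gdvd Q)) \<and>
           X = \<i> ^ (t + 1) * ((P\<^sup>2 + of_int \<epsilon> * (-1) ^ t * \<i> * Q\<^sup>2) / (1 + \<i>)) \<and>
           Y = \<i> ^ t * ((P\<^sup>2 - of_int \<epsilon> * (-1) ^ t * \<i> * Q\<^sup>2) / (1 + \<i>)) \<and>
           Z = (1 + \<i>) * P * Q"
proof -
  note eps = assms(1) and gX = assms(2) and gY = assms(3) and gZ = assms(4) and eq = assms(5)
    and gcd = assms(6) and nz = assms(7) and OX = assms(8) and OY = assms(9) and ZW = assms(10)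
    and OW = assms(11)
  define e where "e = (of_int \<epsilon> :: complex)"
  have e2: "e * e = 1" using eps unfolding e_def by auto
  have ue: "gunit (e * \<i>)" using eps unfolding e_def gunit_def by auto
  have gW: "gauss W" using OI_gauss OW by blast
  obtain k1 m1 where X: "X = Complex (of_int (4*k1+1)) (of_int (2*m1))" using OX in_OI_iff by blast
  obtain k2 m2 where Y: "Y = Complex (of_int (4*k2+1)) (of_int (2*m2))" using OY in_OI_iff by blast
  have Xp: "X + \<i> * Y = Complex (of_int (4*k1+1-2*m2)) (of_int (2*m1+4*k2+1))"
    unfolding X Y by (simp add: complex_eq_iff)
  have Xm: "X - \<i> * Y = Complex (of_int (4*k1+1+2*m2)) (of_int (2*m1-4*k2-1))"
    unfolding X Y by (simp add: complex_eq_iff)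
  have "even (4*k1+1-2*m2 + (2*m1+4*k2+1))" "even (4*k1+1+2*m2 + (2*m1-4*k2-1))" by presburger+
  then have "(1 + \<i>) gdvd X + \<i> * Y" "(1 + \<i>) gdvd X - \<i> * Y" unfolding Xp Xm dvd_1i by blast+
  then obtain A B where A: "gauss A" "X + \<i> * Y = (1 + \<i>) * A" and B: "gauss B" "X - \<i> * Y = (1 + \<i>) * B"
    unfolding gdvd_def by blast
  have oddA: "\<not> (1 + \<i>) gdvd A"
  proof
    assume "(1 + \<i>) gdvd A"
    then obtain c where "gauss c" "A = (1 + \<i>) * c" unfolding gdvd_def by blast
    moreover have "odd (4*k1+1-2*m2)" by presburger
    ultimately show False using odd_not_dvd2 Xp A(2) by metis
  qed
  have oddB: "\<not> (1 + \<i>) gdvd B"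
  proof
    assume "(1 + \<i>) gdvd B"
    then obtain c where "gauss c" "B = (1 + \<i>) * c" unfolding gdvd_def by blast
    moreover have "odd (4*k1+1+2*m2)" by presburger
    ultimately show False using odd_not_dvd2 Xm B(2) by metis
  qed
  have "(1 + \<i>)^2 * (A * B) = (X + \<i> * Y) * (X - \<i> * Y)"
    unfolding A(2) B(2) by (simp add: algebra_simps power2_eq_square)
  also have "\<dots> = X^2 + Y^2" by (simp add: algebra_simps power2_eq_square)
  also have "\<dots> = (1 + \<i>)^2 * (e * \<i> * W^2)" unfolding eq ZW e_def by (simp add: algebra_simps power2_eq_square)
  moreover have "(1 + \<i>) \<noteq> 0" by (simp add: complex_eq_iff)
  ultimately have AB: "A * B = e * \<i> * W^2" by simp
  have W0: "W \<noteq> 0" using nz ZW by auto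
  have A0: "A \<noteq> 0" and B0: "B \<noteq> 0" using AB W0 e2 by auto
  have cop: "\<forall>p. gprime p \<longrightarrow> \<not> (p gdvd A \<and> p gdvd B)"
  proof (intro allI impI notI)
    fix p assume p: "gprime p" and pAB: "p gdvd A \<and> p gdvd B"
    have pg: "gauss p" using gprime_gauss p by blast
    have s: "p gdvd (1 + \<i>) * A + (1 + \<i>) * B" "p gdvd (1 + \<i>) * A - (1 + \<i>) * B"
      using pAB gdvd_add gdvd_diff gdvd_multL by auto
    have "(1 + \<i>) * A + (1 + \<i>) * B = (1 + \<i>) * ((1 + \<i>) * (- \<i> * X))"
      unfolding A(2)[symmetric] B(2)[symmetric] by (simp add: algebra_simps)
    then have "p gdvd (1 + \<i>) * ((1 + \<i>) * (- \<i> * X))" using s by simp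
    then have "p gdvd (1 + \<i>) * (- \<i> * X)" by (rule cancel_1i'[OF _ p conjunct1[OF pAB] oddA]) (use gX in simp)
    then have "p gdvd - \<i> * X" by (rule cancel_1i'[OF _ p conjunct1[OF pAB] oddA]) (use gX in simp)
    then have pX: "p gdvd X" using gdvd_unit_cancel[of p "- \<i>" X] by (simp add: gunit_def)
    have "(1 + \<i>) * A - (1 + \<i>) * B = (1 + \<i>) * ((1 + \<i>) * Y)"
      unfolding A(2)[symmetric] B(2)[symmetric] by (simp add: algebra_simps)
    then have "p gdvd (1 + \<i>) * ((1 + \<i>) * Y)" using s by simp
    then have "p gdvd (1 + \<i>) * Y" by (rule cancel_1i'[OF _ p conjunct1[OF pAB] oddA]) (use gY in simp)
    then have pY: "p gdvd Y" by (rule cancel_1i'[OF _ p conjunct1[OF pAB] oddA]) (use gY in simp)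
    have "p gdvd X * X + Y * Y" using pX pY gX gY gdvd_add gdvd_multR by blast
    then have "p gdvd (e * \<i>) * Z^2" using eq unfolding e_def by (simp add: power2_eq_square mult.assoc)
    then have "p gdvd Z^2" using gdvd_unit_cancel ue by blast
    then have pZ: "p gdvd Z" using euclid_sq p gZ by blast
    have "gunit p" using gcd pg pX pY pZ by blast
    then show False using gprime_nunit p by blast
  qed
  obtain u P0 where uP0: "gunit u" "gauss P0" "A = u * P0^2"
    using sq_lemma[OF A(1) B(1) gW ue A0 cop AB] by blast
  have BA: "B * A = e * \<i> * W^2" using AB by (simp add: mult.commute)
  have cop': "\<forall>p. gprime p \<longrightarrow> \<not> (p gdvd B \<and> p gdvd A)" using cop by blast
  obtain v Q0 where vQ0: "gunit v" "gauss Q0" "B = v * Q0^2"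
    using sq_lemma[OF B(1) A(1) gW ue B0 cop' BA] by blast
  have "\<not> (1 + \<i>) gdvd P0"
    using oddA uP0 gdvd_multL gdvd_multR gunit_gauss by (metis power2_eq_square)
  then obtain u' P where uP: "gunit u'" "in_OI P" "A = u' * P^2" using norm_sq uP0 by metis
  have "\<not> (1 + \<i>) gdvd Q0"
    using oddB vQ0 gdvd_multL gdvd_multR gunit_gauss by (metis power2_eq_square)
  then obtain v' Q where vQ: "gunit v'" "in_OI Q" "B = v' * Q^2" using norm_sq vQ0 by metis
  define r where "r = u' * v' * (- e * \<i>)"
  have ur: "gunit r" unfolding r_def using uP vQ ue gunit_mult
    by (metis eps e_def gunit_def insert_iff mult_minus1 mult_minus_left singletonD)
  have "r * (P * Q)^2 = - e * \<i> * (A * B)" unfolding r_def uP(3) vQ(3) by (simp add: algebra_simps power2_eq_square)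
  also have "\<dots> = W^2" unfolding AB using e2 by (simp add: algebra_simps power2_eq_square)
  finally have rW: "r * (P * Q)^2 = W^2" .
  have OPQ: "in_OI (P * Q)" using OI_mult uP vQ by blast
  obtain a b where ab: "(P*Q)^2 = Complex (of_int (4*a+1)) (of_int (4*b))" using OI_sq[OF OPQ] by blast
  obtain c d where cd: "W^2 = Complex (of_int (4*c+1)) (of_int (4*d))" using OI_sq[OF OW] by blast
  have r1: "r = 1" using sq_unit[OF ur] rW unfolding ab cd by blast
  have "(W - P*Q) * (W + P*Q) = 0" using rW r1 by (simp add: algebra_simps power2_eq_square)
  then have "W = P*Q \<or> W = - (P*Q)" by (auto simp: eq_neg_iff_add_eq_0)
  then have WPQ: "W = P * Q" using OI_neg OPQ OW by blast
  have uv: "u' * v' = e * \<i>"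
  proof -
    have "u' * v' * (- e * \<i>) = 1" using r1 unfolding r_def .
    have ee: "(- e * \<i>) * (e * \<i>) = 1" using e2 by (simp add: algebra_simps)
    have "u' * v' = u' * v' * ((- e * \<i>) * (e * \<i>))" unfolding ee by simp
    also have "\<dots> = (u' * v' * (- e * \<i>)) * (e * \<i>)" by (simp only: mult.assoc)
    also have "\<dots> = e * \<i>" unfolding \<open>u' * v' * (- e * \<i>) = 1\<close> by simp
    finally show ?thesis .
  qed
  obtain t :: nat where t: "t \<le> 3" "u' = \<i>^t"
  proof -
    have "u' = 1 \<or> u' = \<i> \<or> u' = -1 \<or> u' = -\<i>" using uP(1) unfolding gunit_def by auto
    then show ?thesis
    proof (elim disjE)
      assume "u' = 1" then show ?thesis using that[of 0] by simp
    next
      assume "u' = \<i>" then show ?thesis using that[of 1] by simp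
    next
      assume "u' = -1" then show ?thesis using that[of 2] by (simp add: power2_eq_square)
    next
      assume "u' = -\<i>" then show ?thesis using that[of 3] by (simp add: power3_eq_cube)
    qed
  qed
  define cc where "cc = e * (-1)^t"
  have v'eq: "v' = cc * \<i>^(t+1)"
  proof -
    have "\<i>^t * (cc * \<i>^(t+1)) = e * \<i>"
      using t(1) unfolding cc_def by (cases t; cases "t - 1"; cases "t - 2"; simp add: power_Suc numeral_eq_Suc)
    then have "u' * (cc * \<i>^(t+1)) = u' * v'" using uv t(2) by simp
    moreover have "u' \<noteq> 0" using gunit_nz uP by blast
    ultimately show ?thesis by simp
  qed
  have Xf: "X = (1 + \<i>) * (A + B) / 2" using A(2) B(2) by (simp add: field_simps) 
  have Yf: "Y = (1 + \<i>) * (A - B) / (2 * \<i>)" using A(2) B(2) by (simp add: field_simps)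
  have pref: "of_int \<epsilon> * (-1) ^ t * \<i> * Q^2 = cc * \<i> * Q^2" unfolding cc_def e_def by simp
  have "X = \<i> ^ (t + 1) * ((P\<^sup>2 + of_int \<epsilon> * (-1) ^ t * \<i> * Q\<^sup>2) / (1 + \<i>))"
  proof -
    have "\<i> ^ (t + 1) * ((P\<^sup>2 + cc * \<i> * Q\<^sup>2) / (1 + \<i>))
        = \<i> ^ t * (\<i> / (1 + \<i>)) * (P\<^sup>2 + cc * \<i> * Q\<^sup>2)" by (simp add: field_simps)
    also have "\<dots> = (1 + \<i>) * (\<i>^t * P^2 + cc * \<i>^(t+1) * Q^2) / 2"
      unfolding h1 by (simp add: field_simps)
    also have "\<dots> = X" unfolding Xf uP(3) vQ(3) v'eq t(2) by (simp add: algebra_simps)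
    finally show ?thesis unfolding pref by simp
  qed
  moreover have "Y = \<i> ^ t * ((P\<^sup>2 - of_int \<epsilon> * (-1) ^ t * \<i> * Q\<^sup>2) / (1 + \<i>))"
  proof -
    have "\<i> ^ t * ((P\<^sup>2 - cc * \<i> * Q\<^sup>2) / (1 + \<i>))
        = \<i> ^ t * (1 / (1 + \<i>)) * (P\<^sup>2 - cc * \<i> * Q\<^sup>2)" by (simp add: field_simps)
    also have "\<dots> = (1 + \<i>) * (\<i>^t * P^2 - cc * \<i>^(t+1) * Q^2) / (2 * \<i>)"
      unfolding h2 by (simp add: field_simps)
    also have "\<dots> = Y" unfolding Yf uP(3) vQ(3) v'eq t(2) by (simp add: algebra_simps)
    finally show ?thesis unfolding pref by simp
  qed
  moreover have "Z = (1 + \<i>) * P * Q" unfolding ZW WPQ by simp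
  moreover have "\<forall>p. gprime p \<longrightarrow> \<not> (p gdvd P \<and> p gdvd Q)"
  proof (intro allI impI notI)
    fix p assume p: "gprime p" "p gdvd P \<and> p gdvd Q"
    have gP: "gauss P" "gauss Q" using uP vQ OI_gauss by blast+
    have "p gdvd A" unfolding uP(3) power2_eq_square using p gP gdvd_multR gdvd_multL uP(1) gunit_gauss
      by (metis mult.assoc)
    moreover have "p gdvd B" unfolding vQ(3) power2_eq_square using p gP gdvd_multR gdvd_multL vQ(1) gunit_gauss
      by (metis mult.assoc)
    ultimately show False using cop p by blast
  qed
  ultimately show ?thesis using t(1) uP(2) vQ(2) OI_in_G OI_odd by blast
qed

end
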